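(* Let $\mathcal C$ be an EACP over a field $K$ with a natural basis $\{h_1,\dots,h_n,r\}$ whose multiplication table is $$h_1r=\sum_{j=1}^n a_{1j}h_j+\delta r,\ \ \delta\in\{0,1\},\qquad h_ir=\sum_{j=1}^n a_{ij}h_j\ \ (2\le i\le n),$$ (together with $h_ih_j=0$, $rr=0$, and commutativity). Then for the plenary periods $q_i$ of the $h_i$: (a) if $\delta=0$ then $q_i\in\{1,\infty\}$ for all $i$; (b) if $\delta=1$ then $q_1\in\{1,2,\infty\}$ and $q_i\in\{1,\infty\}$ for $i\neq 1$.
   Context: An EACP is a commutative algebra with a basis $\{h_1,\dots,h_n,r\}$ such that $h_ir=rh_i=\sum_j a_{ij}h_j+b_ir$, $h_ih_j=0$, $rr=0$. For $x=\sum_i\alpha_ih_i+ar$, $h_i\prec x$ means $\alpha_i\ne0$. Plenary powers: $y^{[1]}=yy$, $y^{[m]}=y^{[m-1]}y^{[m-1]}$. The plenary period of $h_j$ is $q_j=\min\{m\in\mathbb N: h_j\prec (h_jr)^{[m]}\}$, and $q_j=\infty$ if this set is empty. *)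

theory Defs
  imports Main "HOL-Library.Extended_Nat"
begin

text \<open>Elements are represented by coordinates: a pair (alpha, a) stands for
  sum_{i=1..n} alpha i * h_i + a * r.  The structure constants are
  A i j (coefficient of h_j in h_i r) and B i (coefficient of r in h_i r).\<close>

type_synonym 'a eacp_elem = "(nat \<Rightarrow> 'a) \<times> 'a"

definition eacp_h :: "nat \<Rightarrow> 'a::field eacp_elem" where
  "eacp_h i = ((\<lambda>j. if j = i then 1 else 0), 0)"

definition eacp_r :: "'a::field eacp_elem" where
  "eacp_r = ((\<lambda>j. 0), 1)"

text \<open>Bilinear product determined by h_i r = r h_i = sum_j A i j h_j + B i r,
  h_i h_j = 0, r r = 0.\<close>
definition eacp_mult ::
  "nat \<Rightarrow> (nat \<Rightarrow> nat \<Rightarrow> 'a::field) \<Rightarrow> (nat \<Rightarrow> 'a) \<Rightarrow> 'a eacp_elem \<Rightarrow> 'a eacp_elem \<Rightarrow> 'a eacp_elem" where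
  "eacp_mult n A B x y =
     ((\<lambda>j. \<Sum>i\<in>{1..n}. (fst x i * snd y + snd x * fst y i) * A i j),
      (\<Sum>i\<in>{1..n}. (fst x i * snd y + snd x * fst y i) * B i))"

fun eacp_plenary ::
  "nat \<Rightarrow> (nat \<Rightarrow> nat \<Rightarrow> 'a::field) \<Rightarrow> (nat \<Rightarrow> 'a) \<Rightarrow> 'a eacp_elem \<Rightarrow> nat \<Rightarrow> 'a eacp_elem" where
  "eacp_plenary n A B y 0 = y"
| "eacp_plenary n A B y (Suc m) =
     eacp_mult n A B (eacp_plenary n A B y m) (eacp_plenary n A B y m)"

definition eacp_prec :: "nat \<Rightarrow> 'a::field eacp_elem \<Rightarrow> bool" where
  "eacp_prec i x \<longleftrightarrow> fst x i \<noteq> 0"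

definition plenary_period ::
  "nat \<Rightarrow> (nat \<Rightarrow> nat \<Rightarrow> 'a::field) \<Rightarrow> (nat \<Rightarrow> 'a) \<Rightarrow> nat \<Rightarrow> enat" where
  "plenary_period n A B j =
     (let P = (\<lambda>m. m \<ge> 1 \<and>
                 eacp_prec j (eacp_plenary n A B (eacp_mult n A B (eacp_h j) eacp_r) m))
      in if \<exists>m. P m then enat (LEAST m. P m) else \<infinity>)"

end

theory Submission
  imports Defs
begin

lemma mult_self_zero:
  "snd y = 0 \<Longrightarrow> eacp_mult n A B y y = ((\<lambda>j. 0), 0)"
  by (simp add: eacp_mult_def)

lemma plen_zero: "eacp_plenary n A B ((\<lambda>j. 0), 0) m = ((\<lambda>j. 0), 0)"
  by (induction m) (simp_all add: eacp_mult_def)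

lemma plen_after:
  assumes "snd (eacp_plenary n A B y m) = 0"
  shows "eacp_plenary n A B y (Suc m + k) = ((\<lambda>j. 0), 0)"
proof (induction k)
  case 0 then show ?case using assms by (simp add: mult_self_zero)
next
  case (Suc k) then show ?case by (simp add: mult_self_zero)
qed

lemma hr:
  assumes "j \<in> {1..n}"
  shows "eacp_mult n A B (eacp_h j) eacp_r = ((\<lambda>k. A j k), B j)"
proof -
  have e: "\<And>c::nat\<Rightarrow>'a. (\<Sum>i\<in>{1..n}. (if i = j then 1 else 0) * c i) = c j"
  proof -
    fix c :: "nat \<Rightarrow> 'a"
    have "(\<Sum>i\<in>{1..n}. (if i = j then 1 else 0) * c i) = (\<Sum>i\<in>{1..n}. (if i = j then c i else 0))"
      by (rule sum.cong) auto
    also have "\<dots> = c j" using assms by (simp add: sum.delta)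
    finally show "(\<Sum>i\<in>{1..n}. (if i = j then 1 else 0) * c i) = c j" .
  qed
  show ?thesis using e[of "\<lambda>i. A i _"] e[of B]
    by (simp add: eacp_mult_def eacp_h_def eacp_r_def fun_eq_iff)
qed

lemma snd_mult_zero:
  assumes "fst y 1 = 0"
  shows "snd (eacp_mult n A (\<lambda>i. if i = 1 then d else 0) y y) = 0"
  unfolding eacp_mult_def using assms by (auto intro!: sum.neutral)

lemma period_bound:
  assumes "\<And>m. m \<ge> K \<Longrightarrow> \<not> eacp_prec j (eacp_plenary n A B (eacp_mult n A B (eacp_h j) eacp_r) m)"
  shows "plenary_period n A B j = \<infinity> \<or> (\<exists>m. 1 \<le> m \<and> m < K \<and> plenary_period n A B j = enat m)"
proof -
  define P where "P = (\<lambda>m. m \<ge> 1 \<and>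
                 eacp_prec j (eacp_plenary n A B (eacp_mult n A B (eacp_h j) eacp_r) m))"
  have pp: "plenary_period n A B j = (if \<exists>m. P m then enat (LEAST m. P m) else \<infinity>)"
    unfolding plenary_period_def P_def Let_def by simp
  show ?thesis
  proof (cases "\<exists>m. P m")
    case True
    then obtain m where m: "P m" by blast
    have "P (LEAST m. P m)" using m by (rule LeastI)
    then have "1 \<le> (LEAST m. P m)" "(LEAST m. P m) < K"
      using assms unfolding P_def by (auto simp: not_less[symmetric])
    then show ?thesis using True pp by auto
  qed (simp add: pp)
qed

theorem corollary3p4:
  fixes n :: nat and A :: "nat \<Rightarrow> nat \<Rightarrow> 'a::field" and \<delta> :: 'a
  assumes "\<delta> = 0 \<or> \<delta> = 1"
  defines "B \<equiv> (\<lambda>i. if i = 1 then \<delta> else 0)"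
  shows "(\<delta> = 0 \<longrightarrow> (\<forall>i\<in>{1..n}. plenary_period n A B i \<in> {1, \<infinity>}))
       \<and> (\<delta> = 1 \<longrightarrow> (1 \<le> n \<longrightarrow> plenary_period n A B 1 \<in> {1, 2, \<infinity>})
                 \<and> (\<forall>i\<in>{1..n}. i \<noteq> 1 \<longrightarrow> plenary_period n A B i \<in> {1, \<infinity>}))"
proof -
  have zeroB: "plenary_period n A B i \<in> {1, \<infinity>}" if i: "i \<in> {1..n}" "B i = 0" for i
  proof -
    have "\<not> eacp_prec i (eacp_plenary n A B (eacp_mult n A B (eacp_h i) eacp_r) m)"
      if "m \<ge> 1" for m
    proof -
      define k where "k = m - 1"
      have k: "m = Suc 0 + k" using \<open>m \<ge> 1\<close> unfolding k_def by simp
      have "snd (eacp_plenary n A B (eacp_mult n A B (eacp_h i) eacp_r) 0) = 0"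
        using i hr[OF i(1), of A B] by simp
      from plen_after[OF this, of k] k show ?thesis by (simp add: eacp_prec_def)
    qed
    from period_bound[of 1, OF this] have
      "plenary_period n A B i = \<infinity> \<or> (\<exists>m. 1 \<le> m \<and> m < 1 \<and> plenary_period n A B i = enat m)"
      by blast
    then show ?thesis by simp
  qed
  have one: "plenary_period n A B 1 \<in> {1, 2, \<infinity>}" if "1 \<le> n" and d: "\<delta> = 1"
  proof -
    let ?x = "eacp_mult n A B (eacp_h 1) eacp_r"
    let ?P = "\<lambda>m. m \<ge> 1 \<and> eacp_prec 1 (eacp_plenary n A B ?x m)"
    have pp: "plenary_period n A B 1 = (if \<exists>m. ?P m then enat (LEAST m. ?P m) else \<infinity>)"
      unfolding plenary_period_def Let_def by simp
    have late: "\<not> eacp_prec 1 (eacp_plenary n A B ?x m)" if m: "m \<ge> 3"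
      and n1: "\<not> eacp_prec 1 (eacp_plenary n A B ?x 1)" for m
    proof -
      define k where "k = m - 3"
      have k: "m = Suc 2 + k" using m unfolding k_def by simp
      have f1: "fst (eacp_plenary n A B ?x 1) 1 = 0" using n1 unfolding eacp_prec_def by blast
      have e2: "eacp_plenary n A B ?x 2 = eacp_mult n A B (eacp_plenary n A B ?x 1) (eacp_plenary n A B ?x 1)"
        using eacp_plenary.simps(2)[of n A B ?x 1] by (simp only: Suc_1)
      have "snd (eacp_plenary n A B ?x 2) = 0"
        unfolding e2 using snd_mult_zero[OF f1, of n A \<delta>, folded B_def] .
      from plen_after[OF this, of k] k have "eacp_plenary n A B ?x m = ((\<lambda>j. 0), 0)"
        by (simp only:)
      then show ?thesis by (simp add: eacp_prec_def)
    qed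
    show ?thesis
    proof (cases "eacp_prec 1 (eacp_plenary n A B ?x 1)")
      case True
      then have "?P 1" by simp
      have "(LEAST m. ?P m) = 1"
        by (rule Least_equality) (use True in simp_all)
      moreover have "plenary_period n A B 1 = enat (LEAST m. ?P m)"
        using pp \<open>?P 1\<close> by (metis (no_types, lifting))
      ultimately show ?thesis by (simp add: one_enat_def)
    next
      case F: False
      show ?thesis
      proof (cases "eacp_prec 1 (eacp_plenary n A B ?x 2)")
        case True
        then have "?P 2" by simp
        have "(LEAST m. ?P m) = 2"
        proof (rule Least_equality)
          show "?P 2" by fact
          fix y assume y: "?P y"
          show "2 \<le> y"
          proof (rule ccontr)
            assume "\<not> 2 \<le> y"
            then have "y = 1" using y by linarith
            then show False using y F by simp
          qed
        qed
        moreover have "plenary_period n A B 1 = enat (LEAST m. ?P m)"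
          using pp \<open>?P 2\<close> by (metis (no_types, lifting))
        ultimately show ?thesis by (simp add: numeral_eq_enat)
      next
        case F2: False
        have "\<not> ?P m" for m
        proof
          assume y: "?P m"
          have "m \<noteq> 1" using y F by auto
          moreover have "m \<noteq> 2" using y F2 by auto
          ultimately have "m \<ge> 3" using y by linarith
          then show False using late[OF _ F] y by blast
        qed
        then have "\<not> (\<exists>m. ?P m)" by blast
        then have "plenary_period n A B 1 = \<infinity>" using pp by (metis (no_types, lifting))
        then show ?thesis by simp
      qed
    qed
  qed
  show ?thesis
  proof (intro conjI impI ballI)
    fix i assume "\<delta> = 0" "i \<in> {1..n}"
    then show "plenary_period n A B i \<in> {1, \<infinity>}" by (intro zeroB) (simp_all add: B_def)
  next
    assume "\<delta> = 1" "1 \<le> n" then show "plenary_period n A B 1 \<in> {1, 2, \<infinity>}" by (rule one[rotated])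
  next
    fix i assume "i \<in> {1..n}" "i \<noteq> 1"
    then show "plenary_period n A B i \<in> {1, \<infinity>}" by (intro zeroB) (simp_all add: B_def)
  qed
qed

end
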